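(* Let $T>0$ and let $y:[0,T]\to[0,+\infty)$ be continuous. Assume there exists $k\ge0$ such that $$y(t)\le k\int_0^t\frac{1}{s\sqrt{s}}\int_0^s y(\sigma)\,d\sigma\,ds\qquad\text{for every }t\in[0,T].$$ Then $y(t)=0$ for every $t\in[0,T]$. *)

theory Defs
  imports "HOL-Analysis.Analysis"
begin

end

theory Submission
  imports Defs
begin

lemma intbound:
  fixes a t m :: real and y :: "real \<Rightarrow> real"
  assumes a0: "0 \<le> a" and at: "a \<le> t"
    and cont: "continuous_on {0..t} y"
    and z: "\<And>s. s \<in> {0..a} \<Longrightarrow> y s = 0"
    and ub: "\<And>s. s \<in> {0..t} \<Longrightarrow> y s \<le> m"
  shows "integral {0..t} (\<lambda>s. 1 / (s * sqrt s) * integral {0..s} y) \<le> 2 * m * (sqrt t - sqrt a)"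
proof -
  define f where "f = (\<lambda>s::real. 1 / (s * sqrt s) * integral {0..s} y)"
  have m0: "0 \<le> m" using ub[of a] z[of a] a0 at by auto
  have sq: "sqrt a \<le> sqrt t" using at by simp
  show ?thesis
  proof (cases "f integrable_on {0..t}")
    case False
    then have "integral {0..t} f = 0" by (simp add: not_integrable_integral)
    then show ?thesis using m0 sq unfolding f_def by simp
  next
    case True
    have comb: "integral {0..a} f + integral {a..t} f = integral {0..t} f"
      by (rule Henstock_Kurzweil_Integration.integral_combine[OF a0 at True])
    have f0: "integral {0..a} f = 0"
    proof -
      have "\<And>s. s \<in> {0..a} \<Longrightarrow> f s = 0"
      proof -
        fix s assume s: "s \<in> {0..a}"
        have "integral {0..s} y = integral {0..s} (\<lambda>_. 0)"
          by (rule integral_cong) (use s z in auto)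
        then show "f s = 0" unfolding f_def by simp
      qed
      then have "integral {0..a} f = integral {0..a} (\<lambda>_. 0)"
        by (intro integral_cong) auto
      then show ?thesis by simp
    qed
    define g where "g = (\<lambda>s::real. m / sqrt s)"
    have gint: "(g has_integral (2 * m *  sqrt t - 2 * m *  sqrt a)) {a..t}"
    proof -
      have "(g has_integral ((\<lambda>s. 2 * m *  sqrt s) t - (\<lambda>s. 2 * m *  sqrt s) a)) {a..t}"
      proof (rule fundamental_theorem_of_calculus_interior[OF at])
        show "continuous_on {a..t} (\<lambda>s. 2 * m * sqrt s)"
          by (intro continuous_intros)
        fix x assume x: "x \<in> {a<..<t}"
        show "((\<lambda>s. 2 * m * sqrt s) has_vector_derivative g x) (at x)"
        proof -
          have xp: "0 < x" using x a0 by auto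
          have "((\<lambda>s. 2 * m * sqrt s) has_real_derivative (2 * m * (inverse (sqrt x) / 2))) (at x)"
            using DERIV_cmult[OF DERIV_real_sqrt[OF xp], of "2*m"] by simp
          moreover have "2 * m * (inverse (sqrt x) / 2) = g x" unfolding g_def
            by (simp add: field_simps)
          ultimately show "((\<lambda>s. 2 * m * sqrt s) has_vector_derivative g x) (at x)"
            by (simp add: has_real_derivative_iff_has_vector_derivative)
        qed
      qed
      then show ?thesis by simp
    qed
    have fg: "\<And>s. s \<in> {a..t} \<Longrightarrow> f s \<le> g s"
    proof -
      fix s assume s: "s \<in> {a..t}"
      have s0: "0 \<le> s" using s a0 by auto
      have yint: "y integrable_on {0..s}"
        by (rule integrable_continuous_real, rule continuous_on_subset[OF cont]) (use s in auto)
      have "integral {0..s} y \<le> integral {0..s} (\<lambda>_. m)"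
        by (rule integral_le[OF yint]) (use s ub in auto)
      then have I: "integral {0..s} y \<le> m * s" using s0 by (simp add: mult.commute)
      show "f s \<le> g s"
      proof (cases "s = 0")
        case True then show ?thesis unfolding f_def g_def by simp
      next
        case False
        then have sp: "0 < s" using s0 by simp
        have "f s \<le> 1 / (s * sqrt s) * (m * s)"
          unfolding f_def using I sp by (intro mult_left_mono) auto
        also have "\<dots> = g s" unfolding g_def using sp
          by (simp add: field_simps)
        finally show ?thesis .
      qed
    qed
    have "integral {a..t} f \<le> integral {a..t} g"
      by (rule integral_le[OF integrable_subinterval_real[OF True] has_integral_integrable[OF gint]])
         (use a0 fg in auto)
    also have "\<dots> = 2 * m *  sqrt t - 2 * m *  sqrt a" using gint by (rule integral_unique)
    finally show ?thesis using comb f0 unfolding f_def by (simp add: algebra_simps)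
  qed
qed


lemma step:
  fixes T k a b :: real and y :: "real \<Rightarrow> real"
  assumes cont: "continuous_on {0..T} y"
    and nn: "\<And>t. t \<in> {0..T} \<Longrightarrow> y t \<ge> 0"
    and k0: "k \<ge> 0"
    and H: "\<And>t. t \<in> {0..T} \<Longrightarrow>
           y t \<le> k * integral {0..t} (\<lambda>s. 1 / (s * sqrt s) * integral {0..s} y)"
    and a0: "0 \<le> a" and ab: "a \<le> b" and bT: "b \<le> T"
    and z: "\<And>s. s \<in> {0..a} \<Longrightarrow> y s = 0"
    and small: "2 * k * (sqrt b - sqrt a) \<le> 1/2"
  shows "\<forall>s \<in> {0..b}. y s = 0"
proof -
  have contb: "continuous_on {0..b} y" by (rule continuous_on_subset[OF cont]) (use bT in auto)
  obtain t0 where t0: "t0 \<in> {0..b}" and mx: "\<And>s. s \<in> {0..b} \<Longrightarrow> y s \<le> y t0"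
    using continuous_attains_sup[OF compact_Icc _ contb] a0 ab by fastforce
  define m where "m = y t0"
  have m0: "0 \<le> m" unfolding m_def using nn t0 bT by auto
  have "m \<le> 0"
  proof (cases "t0 \<le> a")
    case True then show ?thesis unfolding m_def using z t0 by auto
  next
    case False
    then have t0a: "a \<le> t0" by simp
    have "integral {0..t0} (\<lambda>s. 1 / (s * sqrt s) * integral {0..s} y) \<le> 2 * m * (sqrt t0 - sqrt a)"
      by (rule intbound[OF a0 t0a continuous_on_subset[OF cont]])
         (use t0 bT z mx m_def in auto)
    also have "\<dots> \<le> 2 * m * (sqrt b - sqrt a)"
      using m0 t0 by (intro mult_left_mono) auto
    finally have I: "integral {0..t0} (\<lambda>s. 1 / (s * sqrt s) * integral {0..s} y) \<le> 2 * m * (sqrt b - sqrt a)" .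
    have "m \<le> k * integral {0..t0} (\<lambda>s. 1 / (s * sqrt s) * integral {0..s} y)"
      unfolding m_def using H t0 bT by auto
    also have "\<dots> \<le> k * (2 * m * (sqrt b - sqrt a))"
      using I k0 by (rule mult_left_mono)
    finally have "m \<le> k * (2 * m * (sqrt b - sqrt a))" .
    also have "\<dots> = m * (2 * k * (sqrt b - sqrt a))" by (simp add: algebra_simps)
    also have "\<dots> \<le> m * (1/2)" using m0 small by (intro mult_left_mono) auto
    finally show ?thesis by simp
  qed
  then show ?thesis
  proof (intro ballI)
    fix s assume s: "s \<in> {0..b}"
    have "y s \<le> 0" using mx[OF s] \<open>m \<le> 0\<close> unfolding m_def by linarith
    moreover have "0 \<le> y s" using nn s bT by auto
    ultimately show "y s = 0" by linarith
  qed
qed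

theorem lemma3p3:
  fixes T k :: real and y :: "real \<Rightarrow> real"
  assumes "T > 0"
    and "continuous_on {0..T} y"
    and "\<And>t. t \<in> {0..T} \<Longrightarrow> y t \<ge> 0"
    and "k \<ge> 0"
    and "\<And>t. t \<in> {0..T} \<Longrightarrow>
           y t \<le> k * integral {0..t} (\<lambda>s. 1 / (s * sqrt s) * integral {0..s} y)"
  shows "\<forall>t \<in> {0..T}. y t = 0"
proof -
  define d where "d = 1 / (4 * k + 1)"
  have d0: "0 < d" unfolding d_def using assms(4) by simp
  have kd: "2 * k * d \<le> 1/2" unfolding d_def using assms(4) by (simp add: field_simps)
  define p where "p = (\<lambda>n::nat. min T ((real n * d)^2))"
  have sqp: "sqrt (p n) = min (sqrt T) (real n * d)" for n
  proof (cases "T \<le> (real n * d)^2")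
    case True
    then have "sqrt T \<le> sqrt ((real n * d)^2)" by (rule real_sqrt_le_mono)
    then show ?thesis using True d0 unfolding p_def by simp
  next
    case False
    then have "sqrt ((real n * d)^2) \<le> sqrt T" by (intro real_sqrt_le_mono) simp
    then show ?thesis using False d0 unfolding p_def by simp
  qed
  have P: "\<forall>s \<in> {0..p n}. y s = 0" for n
  proof (induction n)
    case 0
    have "p 0 = 0" unfolding p_def using assms(1) by simp
    moreover have "y 0 \<le> 0" using assms(5)[of 0] assms(1) by simp
    ultimately show ?case using assms(3)[of 0] assms(1) by auto
  next
    case (Suc n)
    show ?case
    proof (rule step[OF assms(2,3,4,5)])
      show "0 \<le> p n" unfolding p_def using assms(1) by simp
      show "p n \<le> p (Suc n)" unfolding p_def using d0
        by (intro min.mono order.refl power_mono) auto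
      show "p (Suc n) \<le> T" unfolding p_def by simp
      show "\<And>s. s \<in> {0..p n} \<Longrightarrow> y s = 0" using Suc by auto
      have "sqrt (p (Suc n)) - sqrt (p n) \<le> d"
        unfolding sqp using d0 by (auto simp: min_def algebra_simps)
      then show "2 * k * (sqrt (p (Suc n)) - sqrt (p n)) \<le> 1/2"
      proof -
        have "2 * k * (sqrt (p (Suc n)) - sqrt (p n)) \<le> 2 * k * d"
          using \<open>sqrt (p (Suc n)) - sqrt (p n) \<le> d\<close> assms(4) by (intro mult_left_mono) auto
        then show ?thesis using kd by linarith
      qed
    qed
  qed
  obtain n :: nat where n: "sqrt T / d \<le> real n" using real_arch_simple by blast
  then have "sqrt T \<le> real n * d" using d0 by (simp add: field_simps)
  then have "T \<le> (real n * d)^2"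
  proof -
    have "sqrt T ^ 2 \<le> (real n * d)^2"
      by (rule power_mono[OF \<open>sqrt T \<le> real n * d\<close>]) (use assms(1) in simp)
    then show ?thesis using assms(1) by simp
  qed
  then have "p n = T" unfolding p_def by simp
  then show ?thesis using P[of n] by simp
qed

end
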